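(* Let $R \to S$ be a ring homomorphism with the stable prime extension property. (a) If $R$ and $S$ are quasilocal with maximal ideals $\mathfrak{m}$ and $\mathfrak{n}$ and $R \to S$ is a local homomorphism, then the kernel of $R \to S$ is contained in the nilradical of $R$; in particular, if $R$ is reduced then $R \to S$ is injective. (b) For every prime ideal $P$ of $R$, either $PS = S$ or the contraction of $PS$ to $R$ equals $P$.
   Context: All rings are commutative with identity. A ring homomorphism $R \to S$ has the prime extension property if for every prime ideal $P$ of $R$, $PS$ is prime in $S$ or $PS = S$; it has the stable prime extension property if for every $n \ge 0$, $R[X_1,\dots,X_n] \to S[X_1,\dots,X_n]$ has the prime extension property. A quasilocal ring is a ring with a unique maximal ideal (not necessarily Noetherian). *)

theory Defs
  imports "HOL-Algebra.Algebra" "HOL-Library.Poly_Mapping"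
begin

definition type_ring :: "('a::comm_ring_1) ring" where
  "type_ring = \<lparr>carrier = UNIV, monoid.mult = (*), one = 1, ring.zero = 0, add = (+)\<rparr>"

text \<open>The polynomial ring A[X_0,...,X_{n-1}]: polynomials are finitely supported maps
  from monomials (finitely supported exponent vectors) to coefficients, restricted to
  monomials that only involve the first n variables.\<close>
definition mpoly_ring :: "nat \<Rightarrow> (((nat \<Rightarrow>\<^sub>0 nat) \<Rightarrow>\<^sub>0 'a::comm_ring_1) ring)" where
  "mpoly_ring n = \<lparr>carrier = {p. \<forall>m\<in>Poly_Mapping.keys p. Poly_Mapping.keys m \<subseteq> {..<n}},
                   monoid.mult = (*), one = 1, ring.zero = 0, add = (+)\<rparr>"

definition prime_ext_prop :: "('a, 'c) ring_scheme \<Rightarrow> ('b, 'd) ring_scheme \<Rightarrow> ('a \<Rightarrow> 'b) \<Rightarrow> bool" where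
  "prime_ext_prop A B h \<longleftrightarrow>
     (\<forall>P. primeideal P A \<longrightarrow>
        primeideal (genideal B (h ` P)) B \<or> genideal B (h ` P) = carrier B)"

definition stable_prime_ext_prop :: "('a::comm_ring_1 \<Rightarrow> 'b::comm_ring_1) \<Rightarrow> bool" where
  "stable_prime_ext_prop f \<longleftrightarrow>
     (\<forall>n. prime_ext_prop (mpoly_ring n :: ((nat \<Rightarrow>\<^sub>0 nat) \<Rightarrow>\<^sub>0 'a) ring)
                         (mpoly_ring n :: ((nat \<Rightarrow>\<^sub>0 nat) \<Rightarrow>\<^sub>0 'b) ring)
                         (Poly_Mapping.map f))"

definition quasilocal :: "('a, 'c) ring_scheme \<Rightarrow> bool" where
  "quasilocal A \<longleftrightarrow> (\<exists>!m. maximalideal m A)"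

definition nilradical :: "('a::comm_ring_1) set" where
  "nilradical = {a. \<exists>k::nat. a ^ k = 0}"

definition reduced_ring :: "'a::comm_ring_1 itself \<Rightarrow> bool" where
  "reduced_ring _ \<longleftrightarrow> (nilradical :: 'a set) = {0}"

end

theory Submission imports Defs "HOL-Computational_Algebra.Polynomial" begin


definition sring :: "'a::comm_ring_1 set \<Rightarrow> 'a ring" where
  "sring C = \<lparr>carrier = C, monoid.mult = (*), one = 1, ring.zero = 0, add = (+)\<rparr>"

definition closedC :: "'a::comm_ring_1 set \<Rightarrow> bool" where
  "closedC C \<longleftrightarrow> 0 \<in> C \<and> 1 \<in> C \<and> (\<forall>x\<in>C. \<forall>y\<in>C. x + y \<in> C \<and> x * y \<in> C) \<and> (\<forall>x\<in>C. - x \<in> C)"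

definition isid :: "'a::comm_ring_1 set \<Rightarrow> 'a set \<Rightarrow> bool" where
  "isid C I \<longleftrightarrow> I \<subseteq> C \<and> 0 \<in> I \<and> (\<forall>x\<in>I. \<forall>y\<in>I. x + y \<in> I) \<and> (\<forall>x\<in>I. - x \<in> I) \<and> (\<forall>r\<in>C. \<forall>x\<in>I. r * x \<in> I)"

lemma sring_simps [simp]: "carrier (sring C) = C" "monoid.mult (sring C) = (*)" "one (sring C) = 1"
  "ring.zero (sring C) = 0" "add (sring C) = (+)"
  by (simp_all add: sring_def)

lemma sring_abelian: "closedC C \<Longrightarrow> abelian_group (sring C)"
  unfolding closedC_def
  apply (rule abelian_groupI)
  apply (auto simp: algebra_simps)
  subgoal for x by (rule bexI[of _ "- x"]) auto
  done

lemma sring_cring: "closedC C \<Longrightarrow> cring (sring C)"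
  apply (rule cringI[OF sring_abelian])
   apply assumption
  apply (rule comm_monoidI) 
  by (auto simp: closedC_def algebra_simps)

lemma sring_ainv: assumes "closedC C" "x \<in> C" shows "a_inv (sring C) x = - x"
proof -
  interpret cring "sring C" by (rule sring_cring[OF assms(1)])
  have "-x \<in> C" using assms by (auto simp: closedC_def)
  then show ?thesis using assms(2) minus_equality[of "-x" x] by simp
qed

lemma ideal_sring_iff: assumes "closedC C" shows "ideal I (sring C) \<longleftrightarrow> isid C I"
proof
  assume "ideal I (sring C)"
  then interpret ideal I "sring C" .
  show "isid C I" unfolding isid_def
  proof (intro conjI ballI)
    show "I \<subseteq> C" using a_subset by simp
    show "0 \<in> I" using additive_subgroup.zero_closed[OF is_additive_subgroup] by simp
    fix x assume x: "x \<in> I"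
    have xC: "x \<in> C" using x a_subset by auto
    show "- x \<in> I" using additive_subgroup.a_inv_closed[OF is_additive_subgroup x] sring_ainv[OF assms xC] by simp
    { fix y assume "y \<in> I" then show "x + y \<in> I" using additive_subgroup.a_closed[OF is_additive_subgroup x] by simp }
    { fix r assume "r \<in> C" then show "r * x \<in> I" using I_l_closed[OF x] by simp }
  qed
next
  assume h: "isid C I"
  interpret cring "sring C" by (rule sring_cring[OF assms])
  show "ideal I (sring C)"
  proof (rule idealI)
    show "ring (sring C)" by (rule ring_axioms)
    show "subgroup I (add_monoid (sring C))"
    proof (rule subgroup.intro)
      fix x assume x: "x \<in> I"
      then have xC: "x \<in> C" using h by (auto simp: isid_def)
      have "inv\<^bsub>add_monoid (sring C)\<^esub> x = a_inv (sring C) x" by (simp add: a_inv_def)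
      also have "\<dots> = - x" by (rule sring_ainv[OF assms xC])
      finally show "inv\<^bsub>add_monoid (sring C)\<^esub> x \<in> I" using h x by (simp add: isid_def)
    qed (use h in \<open>auto simp: isid_def\<close>)
    fix a x assume ax: "a \<in> I" "x \<in> carrier (sring C)"
    then show xa: "x \<otimes>\<^bsub>sring C\<^esub> a \<in> I" using h by (simp add: isid_def)
    from xa show "a \<otimes>\<^bsub>sring C\<^esub> x \<in> I" by (simp add: mult.commute)
  qed
qed

lemma isid_one: "isid C I \<Longrightarrow> closedC C \<Longrightarrow> 1 \<in> I \<Longrightarrow> I = C"
  unfolding isid_def closedC_def by (metis mult.right_neutral subsetI subset_antisym)

lemma prime_sring_iff: assumes "closedC C" shows "primeideal I (sring C) \<longleftrightarrow>
   isid C I \<and> 1 \<notin> I \<and> (\<forall>a\<in>C. \<forall>b\<in>C. a * b \<in> I \<longrightarrow> a \<in> I \<or> b \<in> I)"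
proof
  assume h: "primeideal I (sring C)"
  then interpret primeideal I "sring C" .
  have "isid C I" using ideal_sring_iff[OF assms] is_ideal by simp
  moreover have "1 \<notin> I" using isid_one[OF \<open>isid C I\<close> assms] I_notcarr by auto
  ultimately show "isid C I \<and> 1 \<notin> I \<and> (\<forall>a\<in>C. \<forall>b\<in>C. a * b \<in> I \<longrightarrow> a \<in> I \<or> b \<in> I)"
    using I_prime by auto
next
  assume h: "isid C I \<and> 1 \<notin> I \<and> (\<forall>a\<in>C. \<forall>b\<in>C. a * b \<in> I \<longrightarrow> a \<in> I \<or> b \<in> I)"
  show "primeideal I (sring C)"
    apply (rule primeidealI)
    using h ideal_sring_iff[OF assms] sring_cring[OF assms] assms by (auto simp: closedC_def)
qed

lemma max_sring_iff: assumes "closedC C" shows "maximalideal I (sring C) \<longleftrightarrow>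
   isid C I \<and> 1 \<notin> I \<and> (\<forall>J. isid C J \<and> I \<subseteq> J \<longrightarrow> J = I \<or> J = C)"
proof
  assume h: "maximalideal I (sring C)"
  then interpret maximalideal I "sring C" .
  have "isid C I" using ideal_sring_iff[OF assms] is_ideal by simp
  moreover have "1 \<notin> I" using isid_one[OF \<open>isid C I\<close> assms] I_notcarr by auto
  ultimately show "isid C I \<and> 1 \<notin> I \<and> (\<forall>J. isid C J \<and> I \<subseteq> J \<longrightarrow> J = I \<or> J = C)"
    using I_maximal ideal_sring_iff[OF assms] by (auto simp: isid_def)
next
  assume h: "isid C I \<and> 1 \<notin> I \<and> (\<forall>J. isid C J \<and> I \<subseteq> J \<longrightarrow> J = I \<or> J = C)"
  show "maximalideal I (sring C)"
    apply (rule maximalidealI)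
    using h ideal_sring_iff[OF assms] assms by (auto simp: closedC_def)
qed

lemma genideal_sring: assumes "closedC C" shows "genideal (sring C) S = \<Inter>{I. isid C I \<and> S \<subseteq> I}"
  unfolding genideal_def using ideal_sring_iff[OF assms] by simp

lemma isid_genideal: assumes "closedC C" "S \<subseteq> C" shows "isid C (genideal (sring C) S)"
proof -
  interpret cring "sring C" by (rule sring_cring[OF assms(1)])
  show ?thesis using genideal_ideal[of S] assms ideal_sring_iff[OF assms(1)] by simp
qed

lemma genideal_sub: assumes "closedC C" "isid C I" "S \<subseteq> I" shows "genideal (sring C) S \<subseteq> I"
  using genideal_sring[OF assms(1)] assms by auto

lemma genideal_super: assumes "closedC C" shows "S \<subseteq> genideal (sring C) S"
  using genideal_sring[OF assms(1)] by auto

lemma closed_UNIV: "closedC UNIV" by (simp add: closedC_def)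

lemma type_ring_eq: "type_ring = sring UNIV" by (simp add: type_ring_def sring_def)

definition mpC :: "nat \<Rightarrow> ((nat \<Rightarrow>\<^sub>0 nat) \<Rightarrow>\<^sub>0 'a::comm_ring_1) set" where
  "mpC n = {p. \<forall>m\<in>Poly_Mapping.keys p. Poly_Mapping.keys m \<subseteq> {..<n}}"

lemma mpoly_ring_eq: "mpoly_ring n = sring (mpC n)" by (simp add: mpoly_ring_def sring_def mpC_def)

lemma closed_mpC: "closedC (mpC n)"
  unfolding closedC_def
proof (intro conjI ballI)
  fix x y :: "(nat \<Rightarrow>\<^sub>0 nat) \<Rightarrow>\<^sub>0 'a" 
  assume "x \<in> mpC n" "y \<in> mpC n"
  then have x: "\<forall>m\<in>Poly_Mapping.keys x. Poly_Mapping.keys m \<subseteq> {..<n}"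
     and y: "\<forall>m\<in>Poly_Mapping.keys y. Poly_Mapping.keys m \<subseteq> {..<n}" by (auto simp: mpC_def)
  have "\<forall>m\<in>Poly_Mapping.keys (x + y). Poly_Mapping.keys m \<subseteq> {..<n}"
    using x y keys_add[of x y] by blast
  then show "x + y \<in> mpC n" by (simp add: mpC_def)
  have "\<forall>m\<in>Poly_Mapping.keys (x * y). Poly_Mapping.keys m \<subseteq> {..<n}"
  proof
    fix m assume "m \<in> Poly_Mapping.keys (x * y)"
    then obtain a b where "m = a + b" "a \<in> Poly_Mapping.keys x" "b \<in> Poly_Mapping.keys y"
      using keys_mult[of x y] by blast
    then show "Poly_Mapping.keys m \<subseteq> {..<n}" using x y keys_add[of a b] by blast
  qed
  then show "x * y \<in> mpC n" by (simp add: mpC_def)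
qed (auto simp: mpC_def)



lemma update_eq_add_single: "a \<notin> Poly_Mapping.keys f \<Longrightarrow> Poly_Mapping.update a b f = f + Poly_Mapping.single a b"
  by (rule poly_mapping_eqI) (auto simp: lookup_update lookup_add lookup_single in_keys_iff when_def)

lemma pm_induct [case_names zero add]:
  assumes "P 0" "\<And>f a b. P f \<Longrightarrow> P (f + Poly_Mapping.single a b)"
  shows "P f"
  proof (induct f rule: update_induct)
  case const then show ?case using assms by simp
next
  case (update f a b) then show ?case using assms(2) update_eq_add_single by metis
qed

definition ev2 :: "'a poly \<Rightarrow> 'a poly \<Rightarrow> ((nat \<Rightarrow>\<^sub>0 nat) \<Rightarrow>\<^sub>0 'a::comm_ring_1) \<Rightarrow> 'a poly" where
  "ev2 x y g = (\<Sum>m\<in>Poly_Mapping.keys g. [:Poly_Mapping.lookup g m:] * x ^ Poly_Mapping.lookup m 0 * y ^ Poly_Mapping.lookup m 1)"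

lemma ev2_add: "ev2 x y (g + h) = ev2 x y g + ev2 x y h"
  unfolding ev2_def
  by (rule setsum_keys_plus_distrib) (simp_all add: algebra_simps smult_add_left)

lemma ev2_zero [simp]: "ev2 x y 0 = 0" by (simp add: ev2_def)

lemma ev2_single: "ev2 x y (Poly_Mapping.single m c) = [:c:] * x ^ Poly_Mapping.lookup m 0 * y ^ Poly_Mapping.lookup m 1"
  by (simp add: ev2_def)

lemma ev2_uminus: "ev2 x y (- g) = - ev2 x y g"
  using ev2_add[of x y g "-g"] by (simp add: eq_neg_iff_add_eq_0 add.commute)

lemma ev2_one: "ev2 x y 1 = 1"
  using ev2_single[of x y 0 1] by (simp flip: single_one)

lemma ev2_mult: "ev2 x y (g * h) = ev2 x y g * ev2 x y h"
proof (induct g rule: pm_induct)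
  case zero then show ?case by simp
next
  case (add f a b)
  have "ev2 x y (Poly_Mapping.single a b * h) = ev2 x y (Poly_Mapping.single a b) * ev2 x y h"
  proof (induct h rule: pm_induct)
    case zero then show ?case by simp
  next
    case (add f' a' b')
    then show ?case
      by (simp add: distrib_left ev2_add mult_single ev2_single lookup_add power_add
          algebra_simps flip: pCons_one)
  qed
  then show ?case using add by (simp add: distrib_right ev2_add)
qed



lemma mono2_eq:
  assumes "Poly_Mapping.keys (m::nat \<Rightarrow>\<^sub>0 nat) \<subseteq> {..<2}"
    "Poly_Mapping.lookup m 0 = Poly_Mapping.lookup m' 0" "Poly_Mapping.lookup m 1 = Poly_Mapping.lookup m' 1"
    "Poly_Mapping.keys m' \<subseteq> {..<2}"
  shows "m = m'"
proof (rule poly_mapping_eqI)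
  fix i show "Poly_Mapping.lookup m i = Poly_Mapping.lookup m' i"
  proof (cases "i < 2")
    case True then have "i = 0 \<or> i = 1" by auto
    then show ?thesis using assms by auto
  next
    case False then show ?thesis using assms by (metis in_keys_iff lessThan_iff subsetD)
  qed
qed

lemma ev2_monom: "ev2 (monom \<alpha> 1) (monom \<beta> 2) g =
  (\<Sum>m\<in>Poly_Mapping.keys g. monom (Poly_Mapping.lookup g m * \<alpha> ^ Poly_Mapping.lookup m 0 * \<beta> ^ Poly_Mapping.lookup m 1)
     (Poly_Mapping.lookup m 0 + 2 * Poly_Mapping.lookup m 1))"
  unfolding ev2_def
  by (rule sum.cong) (simp_all add: monom_power mult_monom flip: monom_0)

lemma coeff_ev2_0:
  assumes "g \<in> mpC 2"
  shows "coeff (ev2 (monom \<alpha> 1) (monom \<beta> 2) g) 0 = Poly_Mapping.lookup g 0"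
proof -
  have "coeff (ev2 (monom \<alpha> 1) (monom \<beta> 2) g) 0 =
    (\<Sum>m\<in>Poly_Mapping.keys g. if m = 0 then Poly_Mapping.lookup g m else 0)"
    unfolding ev2_monom coeff_sum
  proof (rule sum.cong)
    fix m assume m: "m \<in> Poly_Mapping.keys g"
    then have k: "Poly_Mapping.keys m \<subseteq> {..<2}" using assms by (auto simp: mpC_def)
    have "(m = 0) = (Poly_Mapping.lookup m 0 = 0 \<and> Poly_Mapping.lookup m 1 = 0)"
      using mono2_eq[OF k, of 0] by auto
    then show "coeff (monom (Poly_Mapping.lookup g m * \<alpha> ^ Poly_Mapping.lookup m 0 * \<beta> ^ Poly_Mapping.lookup m 1)
       (Poly_Mapping.lookup m 0 + 2 * Poly_Mapping.lookup m 1)) 0 = (if m = 0 then Poly_Mapping.lookup g m else 0)"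
      by auto
  qed simp
  also have "\<dots> = Poly_Mapping.lookup g 0"
    by (simp add: sum.delta in_keys_iff)
  finally show ?thesis .
qed

lemma coeff_ev2_1:
  assumes "g \<in> mpC 2"
  shows "coeff (ev2 (monom \<alpha> 1) (monom \<beta> 2) g) 1 = Poly_Mapping.lookup g (Poly_Mapping.single 0 1) * \<alpha>"
proof -
  have "coeff (ev2 (monom \<alpha> 1) (monom \<beta> 2) g) 1 =
    (\<Sum>m\<in>Poly_Mapping.keys g. if m = Poly_Mapping.single 0 1 then Poly_Mapping.lookup g m * \<alpha> else 0)"
    unfolding ev2_monom coeff_sum
  proof (rule sum.cong)
    fix m assume m: "m \<in> Poly_Mapping.keys g"
    then have k: "Poly_Mapping.keys m \<subseteq> {..<2}" using assms by (auto simp: mpC_def)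
    have "(m = Poly_Mapping.single 0 1) = (Poly_Mapping.lookup m 0 = 1 \<and> Poly_Mapping.lookup m 1 = 0)"
      using mono2_eq[OF k, of "Poly_Mapping.single 0 1"] by (auto simp: lookup_single)
    moreover have "(Poly_Mapping.lookup m 0 + 2 * Poly_Mapping.lookup m 1 = 1) = (Poly_Mapping.lookup m 0 = 1 \<and> Poly_Mapping.lookup m 1 = 0)"
      by presburger
    ultimately show "coeff (monom (Poly_Mapping.lookup g m * \<alpha> ^ Poly_Mapping.lookup m 0 * \<beta> ^ Poly_Mapping.lookup m 1)
       (Poly_Mapping.lookup m 0 + 2 * Poly_Mapping.lookup m 1)) 1 = (if m = Poly_Mapping.single 0 1 then Poly_Mapping.lookup g m * \<alpha> else 0)"
      by auto
  qed simp
  also have "\<dots> = Poly_Mapping.lookup g (Poly_Mapping.single 0 1) * \<alpha>"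
    by (simp add: sum.delta in_keys_iff)
  finally show ?thesis .
qed

lemma poly_prime_coeff:
  fixes p q :: "'a::comm_ring_1 poly"
  assumes P: "isid UNIV P" "\<forall>a b. a * b \<in> P \<longrightarrow> a \<in> P \<or> b \<in> P"
    and pq: "\<forall>n. coeff (p * q) n \<in> P"
  shows "(\<forall>n. coeff p n \<in> P) \<or> (\<forall>n. coeff q n \<in> P)"
proof (rule ccontr)
  assume "\<not> ?thesis"
  then obtain i j where i: "coeff p i \<notin> P" and j: "coeff q j \<notin> P" by auto
  define i0 where "i0 = (LEAST i. coeff p i \<notin> P)"
  define j0 where "j0 = (LEAST j. coeff q j \<notin> P)"
  have i0: "coeff p i0 \<notin> P" "\<And>k. k < i0 \<Longrightarrow> coeff p k \<in> P"
  proof -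
    show "coeff p i0 \<notin> P" unfolding i0_def by (rule LeastI_ex) (use i in blast)
    show "k < i0 \<Longrightarrow> coeff p k \<in> P" for k unfolding i0_def using not_less_Least[of k "\<lambda>i. coeff p i \<notin> P"] by blast
  qed
  have j0: "coeff q j0 \<notin> P" "\<And>k. k < j0 \<Longrightarrow> coeff q k \<in> P"
  proof -
    show "coeff q j0 \<notin> P" unfolding j0_def by (rule LeastI_ex) (use j in blast)
    show "k < j0 \<Longrightarrow> coeff q k \<in> P" for k unfolding j0_def using not_less_Least[of k "\<lambda>i. coeff q i \<notin> P"] by blast
  qed
  have sumP: "finite A \<Longrightarrow> (\<forall>k\<in>A. h k \<in> P) \<Longrightarrow> sum h A \<in> P" for A and h :: "nat \<Rightarrow> 'a"
    by (induct A rule: finite_induct) (use P in \<open>auto simp: isid_def\<close>)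
  let ?n = "i0 + j0"
  have split: "coeff (p * q) ?n = coeff p i0 * coeff q j0 + (\<Sum>k\<in>{..?n} - {i0}. coeff p k * coeff q (?n - k))"
    unfolding coeff_mult by (subst sum.remove[of _ i0]) auto
  have rest: "(\<Sum>k\<in>{..?n} - {i0}. coeff p k * coeff q (?n - k)) \<in> P"
  proof (rule sumP, simp, intro ballI)
    fix k assume k: "k \<in> {..?n} - {i0}"
    show "coeff p k * coeff q (?n - k) \<in> P"
    proof (cases "k < i0")
      case True then have "coeff p k \<in> P" by (rule i0(2))
      then have "coeff q (?n - k) * coeff p k \<in> P" using P(1) unfolding isid_def by blast
      then show ?thesis by (simp add: mult.commute)
    next
      case False then have "?n - k < j0" using k by auto
      then have "coeff q (?n - k) \<in> P" by (rule j0(2))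
      then show ?thesis using P(1) by (auto simp: isid_def)
    qed
  qed
  have "coeff p i0 * coeff q j0 = coeff (p * q) ?n + - (\<Sum>k\<in>{..?n} - {i0}. coeff p k * coeff q (?n - k))"
    using split by simp
  also have "\<dots> \<in> P" using pq rest P(1) unfolding isid_def by blast
  finally show False using P(2) i0(1) j0(1) by blast
qed



lemma isid_sum: assumes "isid C P" "finite A" "\<forall>k\<in>A. h k \<in> P" shows "sum h A \<in> P"
  using assms(2,3) by (induct A rule: finite_induct) (use assms(1) in \<open>auto simp: isid_def\<close>)

lemma lookup_map0: "f 0 = 0 \<Longrightarrow> Poly_Mapping.lookup (Poly_Mapping.map f g) m = f (Poly_Mapping.lookup g m)"
  by (simp add: Poly_Mapping.map.rep_eq when_def)

lemma keys_map0: "f 0 = 0 \<Longrightarrow> Poly_Mapping.keys (Poly_Mapping.map f g) \<subseteq> Poly_Mapping.keys g"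
  by (auto simp: in_keys_iff lookup_map0)

lemma map_mpC: "f 0 = 0 \<Longrightarrow> g \<in> mpC n \<Longrightarrow> Poly_Mapping.map f g \<in> mpC n"
  using keys_map0[of f g] by (auto simp: mpC_def)

lemma single_mpC: "Poly_Mapping.keys m \<subseteq> {..<n} \<Longrightarrow> Poly_Mapping.single m c \<in> mpC n"
  by (auto simp: mpC_def)

lemma core_b:
  fixes f :: "'a::comm_ring_1 \<Rightarrow> 'b::comm_ring_1" and a :: 'a
  assumes fadd: "\<And>x y. f (x + y) = f x + f y" and fmul: "\<And>x y. f (x * y) = f x * f y" and f1: "f 1 = 1"
    and pep: "prime_ext_prop (mpoly_ring 2 :: ((nat \<Rightarrow>\<^sub>0 nat) \<Rightarrow>\<^sub>0 'a) ring)
                         (mpoly_ring 2 :: ((nat \<Rightarrow>\<^sub>0 nat) \<Rightarrow>\<^sub>0 'b) ring) (Poly_Mapping.map f)"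
    and P: "isid UNIV P" "1 \<notin> P" "\<forall>x y. x * y \<in> P \<longrightarrow> x \<in> P \<or> y \<in> P"
    and aP: "a \<notin> P" and GI: "GI = genideal (type_ring :: 'b ring) (f ` P)"
    and fa: "f a \<in> GI" and GIne: "1 \<notin> GI"
  shows False
proof -
  have f0: "f 0 = 0" using fadd[of 0 0] by simp
  have fneg: "f (- x) = - f x" for x using fadd[of x "-x"] f0 by (simp add: eq_neg_iff_add_eq_0 add.commute)
  have GIid: "isid UNIV GI" unfolding GI type_ring_eq by (rule isid_genideal[OF closed_UNIV]) simp
  have fPGI: "f ` P \<subseteq> GI" unfolding GI type_ring_eq by (rule genideal_super[OF closed_UNIV])
  define phi where "phi = ev2 (monom a 1) (monom a 2)"
  define Q where "Q = {g \<in> mpC 2. \<forall>k. coeff (phi g) k \<in> P}"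
  have Pmul: "x \<in> P \<Longrightarrow> y * x \<in> P" "x \<in> P \<Longrightarrow> x * y \<in> P" for x y
    using P(1) unfolding isid_def by (metis UNIV_I mult.commute)+
  have Qid: "isid (mpC 2) Q"
    unfolding isid_def
  proof (intro conjI ballI)
    show "Q \<subseteq> mpC 2" by (auto simp: Q_def)
    show "0 \<in> Q" using closed_mpC P(1) by (auto simp: Q_def closedC_def isid_def phi_def)
    fix x assume x: "x \<in> Q"
    show "- x \<in> Q" using x closed_mpC P(1) by (auto simp: Q_def closedC_def isid_def phi_def ev2_uminus)
    { fix y assume y: "y \<in> Q"
      show "x + y \<in> Q" using x y closed_mpC P(1) by (auto simp: Q_def closedC_def isid_def phi_def ev2_add) }
    { fix r :: "(nat \<Rightarrow>\<^sub>0 nat) \<Rightarrow>\<^sub>0 'a" assume r: "r \<in> mpC 2"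
      have "r * x \<in> mpC 2" using r x closed_mpC by (auto simp: Q_def closedC_def)
      moreover have "coeff (phi (r * x)) k \<in> P" for k
        unfolding phi_def ev2_mult coeff_mult
        by (rule isid_sum[OF P(1)]) (use x in \<open>auto simp: Q_def phi_def intro: Pmul\<close>)
      ultimately show "r * x \<in> Q" by (simp add: Q_def) }
  qed
  have Qprime: "primeideal Q (mpoly_ring 2)"
    unfolding mpoly_ring_eq prime_sring_iff[OF closed_mpC]
  proof (intro conjI ballI impI)
    show "isid (mpC 2) Q" by (rule Qid)
    show "1 \<notin> Q" using P(2) by (auto simp: Q_def phi_def ev2_one dest: spec[of _ 0])
    fix x y assume xy: "x \<in> mpC 2" "y \<in> mpC 2" "x * y \<in> Q"
    then have "\<forall>n. coeff (phi x * phi y) n \<in> P" by (auto simp: Q_def phi_def ev2_mult)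
    then show "x \<in> Q \<or> y \<in> Q" using poly_prime_coeff[OF P(1)] P(3) xy by (auto simp: Q_def)
  qed
  define J where "J = genideal (mpoly_ring 2 :: ((nat \<Rightarrow>\<^sub>0 nat) \<Rightarrow>\<^sub>0 'b) ring) (Poly_Mapping.map f ` Q)"
  have fQ: "Poly_Mapping.map f ` Q \<subseteq> mpC 2" using map_mpC[of f] f0 by (auto simp: Q_def)
  have Jcase: "primeideal J (mpoly_ring 2) \<or> J = carrier (mpoly_ring 2 :: ((nat \<Rightarrow>\<^sub>0 nat) \<Rightarrow>\<^sub>0 'b) ring)"
    using pep Qprime unfolding prime_ext_prop_def J_def by blast
  have Jid: "isid (mpC 2) J" unfolding J_def mpoly_ring_eq by (rule isid_genideal[OF closed_mpC fQ])
  have fQJ: "Poly_Mapping.map f ` Q \<subseteq> J" unfolding J_def mpoly_ring_eq by (rule genideal_super[OF closed_mpC])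
  define psi where "psi = ev2 (monom (1::'b) 1) (monom 0 2)"
  define K where "K = {h \<in> mpC 2. coeff (psi h) 0 \<in> GI \<and> coeff (psi h) 1 \<in> GI}"
  have Kid: "isid (mpC 2) K"
    unfolding isid_def
  proof (intro conjI ballI)
    show "K \<subseteq> mpC 2" by (auto simp: K_def)
    show "0 \<in> K" using closed_mpC GIid by (auto simp: K_def closedC_def isid_def psi_def)
    fix x assume x: "x \<in> K"
    show "- x \<in> K" using x closed_mpC GIid by (auto simp: K_def closedC_def isid_def psi_def ev2_uminus)
    { fix y assume y: "y \<in> K"
      show "x + y \<in> K" using x y closed_mpC GIid by (auto simp: K_def closedC_def isid_def psi_def ev2_add) }
    { fix r :: "(nat \<Rightarrow>\<^sub>0 nat) \<Rightarrow>\<^sub>0 'b" assume r: "r \<in> mpC 2"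
      have "r * x \<in> mpC 2" using r x closed_mpC by (auto simp: K_def closedC_def)
      moreover have "coeff (psi (r * x)) k \<in> GI" if "k \<le> 1" for k
        unfolding psi_def ev2_mult coeff_mult
        by (rule isid_sum[OF GIid]) (use x that GIid in \<open>auto simp: K_def psi_def isid_def le_Suc_eq\<close>)
      ultimately show "r * x \<in> K" by (simp add: K_def) }
  qed
  have fQK: "Poly_Mapping.map f ` Q \<subseteq> K"
  proof
    fix h assume "h \<in> Poly_Mapping.map f ` Q"
    then obtain g where g: "g \<in> Q" "h = Poly_Mapping.map f g" by auto
    have gC: "g \<in> mpC 2" using g by (simp add: Q_def)
    have hC: "h \<in> mpC 2" using g fQ by auto
    have c0: "coeff (phi g) 0 = Poly_Mapping.lookup g 0" unfolding phi_def by (rule coeff_ev2_0[OF gC])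
    have c1: "coeff (phi g) 1 = Poly_Mapping.lookup g (Poly_Mapping.single 0 1) * a" unfolding phi_def by (rule coeff_ev2_1[OF gC])
    have gk: "coeff (phi g) k \<in> P" for k using g by (simp add: Q_def)
    have g0: "Poly_Mapping.lookup g 0 \<in> P" using gk[of 0] c0 by simp
    have "Poly_Mapping.lookup g (Poly_Mapping.single 0 1) * a \<in> P" using gk[of 1] c1 by simp
    then have g1: "Poly_Mapping.lookup g (Poly_Mapping.single 0 1) \<in> P" using P(3) aP by blast
    have "coeff (psi h) 0 = f (Poly_Mapping.lookup g 0)" unfolding psi_def
      using coeff_ev2_0[OF hC, of 1 0] g(2) lookup_map0[of f, OF f0] by simp
    moreover have "coeff (psi h) 1 = f (Poly_Mapping.lookup g (Poly_Mapping.single 0 1))" unfolding psi_def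
      using coeff_ev2_1[OF hC, of 1 0] g(2) lookup_map0[of f, OF f0] by simp
    ultimately show "h \<in> K" using hC g0 g1 fPGI by (auto simp: K_def)
  qed
  have JK: "J \<subseteq> K" unfolding J_def mpoly_ring_eq by (rule genideal_sub[OF closed_mpC Kid fQK])
  define Xv :: "(nat \<Rightarrow>\<^sub>0 nat) \<Rightarrow>\<^sub>0 'b" where "Xv = Poly_Mapping.single (Poly_Mapping.single 0 1) 1"
  have XvC: "Xv \<in> mpC 2" unfolding Xv_def by (rule single_mpC) simp
  have XvK: "Xv \<notin> K" using coeff_ev2_1[OF XvC, of 1 0] GIne by (simp add: K_def psi_def Xv_def)
  have oneK: "1 \<notin> K" using GIne by (simp add: K_def psi_def ev2_one)
  have JneC: "J \<noteq> mpC 2" using oneK JK closed_mpC by (auto simp: closedC_def)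
  have Jprime: "primeideal J (mpoly_ring 2)" using Jcase JneC by (simp add: mpoly_ring_eq)
  define L where "L = {s. Poly_Mapping.single 0 s \<in> J}"
  have LUNIV: "isid UNIV L"
    unfolding isid_def L_def
  proof (intro conjI ballI; clarsimp?)
    show "0 \<in> J" using Jid by (simp add: isid_def)
    fix x assume x: "Poly_Mapping.single 0 x \<in> J"
    show "Poly_Mapping.single 0 (- x) \<in> J" using x Jid by (simp add: isid_def single_uminus)
    { fix y assume "Poly_Mapping.single 0 y \<in> J"
      then show "Poly_Mapping.single 0 (x + y) \<in> J" using x Jid by (simp add: isid_def single_add) }
    { fix r :: 'b
      have "Poly_Mapping.single 0 r \<in> mpC 2" by (rule single_mpC) simp
      moreover have "Poly_Mapping.single 0 (r * x) = Poly_Mapping.single 0 r * Poly_Mapping.single 0 x" by (simp add: mult_single)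
      ultimately show "Poly_Mapping.single 0 (r * x) \<in> J" using x Jid unfolding isid_def by metis }
  qed
  have fPL: "f ` P \<subseteq> L"
  proof
    fix s assume "s \<in> f ` P"
    then obtain p where p: "p \<in> P" "s = f p" by auto
    have "Poly_Mapping.single 0 p \<in> mpC 2" by (rule single_mpC) simp
    moreover have "coeff (phi (Poly_Mapping.single 0 p)) k \<in> P" for k
      using p P(1) by (simp add: phi_def ev2_single isid_def coeff_pCons split: nat.split)
    ultimately have "Poly_Mapping.single 0 p \<in> Q" by (simp add: Q_def)
    then have "Poly_Mapping.map f (Poly_Mapping.single 0 p) \<in> J" using fQJ by auto
    then show "s \<in> L" using p f0 by (simp add: L_def)
  qed
  have GIL: "GI \<subseteq> L" unfolding GI type_ring_eq by (rule genideal_sub[OF closed_UNIV LUNIV fPL])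
  define g0 :: "(nat \<Rightarrow>\<^sub>0 nat) \<Rightarrow>\<^sub>0 'a" where
    "g0 = Poly_Mapping.single (Poly_Mapping.single 1 1) a + Poly_Mapping.single (Poly_Mapping.single 0 2) (-1)"
  have g0C: "g0 \<in> mpC 2"
  proof -
    have "Poly_Mapping.single (Poly_Mapping.single 1 1) a \<in> mpC 2" by (rule single_mpC) simp
    moreover have "Poly_Mapping.single (Poly_Mapping.single 0 2) (-1::'a) \<in> mpC 2" by (rule single_mpC) (metis keys_single single_numeral zero_neq_numeral lessThan_iff empty_subsetI insert_subset zero_less_numeral)
    ultimately show ?thesis using closed_mpC[where 'a='a, of 2] unfolding g0_def closedC_def by blast
  qed
  have "phi g0 = 0" unfolding phi_def g0_def
    by (simp add: ev2_add ev2_single lookup_single lookup_numeral when_def monom_power mult_monom add_monom power2_eq_square flip: monom_0)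
  then have "g0 \<in> Q" using g0C P(1) by (simp add: Q_def isid_def)
  then have mg0: "Poly_Mapping.map f g0 \<in> J" using fQJ by auto
  have mapg0: "Poly_Mapping.map f g0 = Poly_Mapping.single (Poly_Mapping.single 1 1) (f a) + Poly_Mapping.single (Poly_Mapping.single 0 2) (-1)"
    by (rule poly_mapping_eqI) (simp add: lookup_map0[of f, OF f0] g0_def lookup_add fadd lookup_single when_def fneg f1 f0)
  have "Poly_Mapping.single 0 (f a) \<in> J" using fa GIL by (auto simp: L_def)
  moreover have "Poly_Mapping.single (Poly_Mapping.single 1 1) (1::'b) \<in> mpC 2" by (rule single_mpC) auto
  ultimately have "Poly_Mapping.single (Poly_Mapping.single 1 1) 1 * Poly_Mapping.single 0 (f a) \<in> J"
    using Jid by (simp add: isid_def)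
  then have t1: "Poly_Mapping.single (Poly_Mapping.single 1 1) (f a) \<in> J" by (simp add: mult_single)
  have "Poly_Mapping.single (Poly_Mapping.single 0 2) (-1::'b) = Poly_Mapping.map f g0 + - Poly_Mapping.single (Poly_Mapping.single 1 1) (f a)"
    by (simp add: mapg0)
  also have "\<dots> \<in> J" using mg0 t1 Jid unfolding isid_def by blast
  finally have "- Poly_Mapping.single (Poly_Mapping.single 0 2) (-1::'b) \<in> J" using Jid unfolding isid_def by blast
  moreover have "Xv * Xv = - Poly_Mapping.single (Poly_Mapping.single 0 2) (-1::'b)"
  proof -
    have e1: "Xv * Xv = Poly_Mapping.single (Poly_Mapping.single 0 1 + Poly_Mapping.single 0 1) (1::'b)"
      by (simp only: Xv_def mult_single mult_1)
    have e2: "Poly_Mapping.single 0 (1::nat) + Poly_Mapping.single 0 1 = Poly_Mapping.single 0 2"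
      by (simp only: single_add[symmetric] one_add_one)
    have e3: "- Poly_Mapping.single (Poly_Mapping.single 0 2) (-1::'b) = Poly_Mapping.single (Poly_Mapping.single 0 2) 1"
      by (simp only: single_uminus[symmetric] minus_minus)
    show ?thesis by (simp only: e1 e2 e3)
  qed
  ultimately have "Xv * Xv \<in> J" by simp
  then have "Xv \<in> J" using Jprime XvC unfolding mpoly_ring_eq prime_sring_iff[OF closed_mpC] by blast
  then show False using JK XvK by auto
qed



lemma zorn_ideal:
  fixes I :: "'a::comm_ring_1 set"
  assumes "isid UNIV I" "\<forall>k. x ^ k \<notin> I"
  shows "\<exists>Q. isid UNIV Q \<and> I \<subseteq> Q \<and> (\<forall>k. x ^ k \<notin> Q) \<and>
             (\<forall>Q'. isid UNIV Q' \<and> Q \<subseteq> Q' \<and> (\<forall>k. x ^ k \<notin> Q') \<longrightarrow> Q' = Q)"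
proof -
  define A where "A = {Q. isid UNIV Q \<and> I \<subseteq> Q \<and> (\<forall>k. x ^ k \<notin> Q)}"
  have "\<exists>M\<in>A. \<forall>W1\<in>A. M \<subseteq> W1 \<longrightarrow> W1 = M"
  proof (rule subset_Zorn_nonempty)
    show "A \<noteq> {}" using assms by (auto simp: A_def)
    fix C assume C: "C \<noteq> {}" "subset.chain A C"
    have CA: "C \<subseteq> A" and ch: "\<And>W1 W2. W1 \<in> C \<Longrightarrow> W2 \<in> C \<Longrightarrow> W1 \<subseteq> W2 \<or> W2 \<subseteq> W1"
      using C(2) by (auto simp: subset.chain_def)
    have "isid UNIV (\<Union>C)" unfolding isid_def
    proof (intro conjI ballI allI)
      show "\<Union>C \<subseteq> UNIV" by simp
      obtain W1 where "W1 \<in> C" using C(1) by auto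
      then show "0 \<in> \<Union>C" using CA by (auto simp: A_def isid_def)
      fix u assume "u \<in> \<Union>C"
      then obtain W1 where W1: "W1 \<in> C" "u \<in> W1" by auto
      then have W1i: "isid UNIV W1" using CA by (auto simp: A_def)
      show "- u \<in> \<Union>C" using W1 W1i unfolding isid_def by blast
      { fix r :: 'a show "r * u \<in> \<Union>C" using W1 W1i unfolding isid_def by blast }
      { fix v assume "v \<in> \<Union>C"
        then obtain W2 where W2: "W2 \<in> C" "v \<in> W2" by auto
        then have W2i: "isid UNIV W2" using CA by (auto simp: A_def)
        show "u + v \<in> \<Union>C"
        proof (cases "W1 \<subseteq> W2")
          case True then show ?thesis using W1 W2 W2i unfolding isid_def by blast
        next
          case False then have "W2 \<subseteq> W1" using ch W1 W2 by blast
          then show ?thesis using W1 W2 W1i unfolding isid_def by blast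
        qed }
    qed
    moreover have "I \<subseteq> \<Union>C" using C(1) CA by (auto simp: A_def)
    moreover have "\<forall>k. x ^ k \<notin> \<Union>C" using CA by (auto simp: A_def)
    ultimately show "\<Union>C \<in> A" by (simp add: A_def)
  qed
  then obtain M where M: "M \<in> A" "\<forall>W1\<in>A. M \<subseteq> W1 \<longrightarrow> W1 = M" by blast
  have M1: "isid UNIV M" "I \<subseteq> M" "\<forall>k. x ^ k \<notin> M" using M(1) by (simp_all add: A_def)
  have M2: "\<forall>Q'. isid UNIV Q' \<and> M \<subseteq> Q' \<and> (\<forall>k. x ^ k \<notin> Q') \<longrightarrow> Q' = M"
  proof (intro allI impI)
    fix Q' assume Q': "isid UNIV Q' \<and> M \<subseteq> Q' \<and> (\<forall>k. x ^ k \<notin> Q')"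
    then have "Q' \<in> A" using M1(2) by (auto simp: A_def)
    then show "Q' = M" using M(2) Q' by blast
  qed
  show ?thesis using M1 M2 by blast
qed

lemma maximal_is_prime:
  fixes Q :: "'a::comm_ring_1 set"
  assumes Q: "isid UNIV Q" "\<forall>k. x ^ k \<notin> Q"
    and mx: "\<forall>Q'. isid UNIV Q' \<and> Q \<subseteq> Q' \<and> (\<forall>k. x ^ k \<notin> Q') \<longrightarrow> Q' = Q"
  shows "\<forall>b c. b * c \<in> Q \<longrightarrow> b \<in> Q \<or> c \<in> Q"
proof (intro allI impI, rule ccontr)
  fix b c assume bc: "b * c \<in> Q" and nbc: "\<not> (b \<in> Q \<or> c \<in> Q)"
  have ext: "\<exists>k q r. q \<in> Q \<and> x ^ k = q + r * b" if "b \<notin> Q" for b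
  proof (rule ccontr)
    assume no: "\<not> ?thesis"
    define Qb where "Qb = {q + r * b | q r. q \<in> Q}"
    have "isid UNIV Qb" unfolding isid_def Qb_def
    proof (intro conjI ballI allI)
      have "(0::'a) = 0 + 0 * b" by simp
      then show "0 \<in> {q + r * b |q r. q \<in> Q}" using Q(1) unfolding isid_def by blast
      fix u assume "u \<in> {q + r * b |q r. q \<in> Q}"
      then obtain q r where u: "u = q + r * b" "q \<in> Q" by auto
      have "- u = (- q) + (- r) * b" using u by simp
      moreover have "- q \<in> Q" using u Q(1) unfolding isid_def by blast
      ultimately show "- u \<in> {q + r * b |q r. q \<in> Q}" by blast
      { fix s :: 'a
        have "s * u = (s * q) + (s * r) * b" using u by (simp add: algebra_simps)
        moreover have "s * q \<in> Q" using u Q(1) unfolding isid_def by blast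
        ultimately show "s * u \<in> {q + r * b |q r. q \<in> Q}" by blast }
      { fix v assume "v \<in> {q + r * b |q r. q \<in> Q}"
        then obtain q' r' where v: "v = q' + r' * b" "q' \<in> Q" by auto
        have "u + v = (q + q') + (r + r') * b" using u v by (simp add: algebra_simps)
        moreover have "q + q' \<in> Q" using u v Q(1) unfolding isid_def by blast
        ultimately show "u + v \<in> {q + r * b |q r. q \<in> Q}" by blast }
    qed (simp)
    moreover have "Q \<subseteq> Qb"
    proof
      fix q assume "q \<in> Q"
      moreover have "q = q + 0 * b" by simp
      ultimately show "q \<in> Qb" unfolding Qb_def by blast
    qed
    moreover have "\<forall>k. x ^ k \<notin> Qb" using no unfolding Qb_def by blast
    ultimately have "Qb = Q" using mx by blast
    moreover have "b \<in> Qb"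
    proof -
      have "b = 0 + 1 * b" by simp
      then show ?thesis unfolding Qb_def using Q(1) unfolding isid_def by blast
    qed
    ultimately show False using that by simp
  qed
  obtain i q1 r1 where 1: "q1 \<in> Q" "x ^ i = q1 + r1 * b" using ext nbc by blast
  obtain j q2 r2 where 2: "q2 \<in> Q" "x ^ j = q2 + r2 * c" using ext nbc by blast
  have "x ^ (i + j) = q1 * (q2 + r2 * c) + r1 * b * q2 + (r1 * r2) * (b * c)"
    by (simp add: power_add 1 2 algebra_simps)
  also have "\<dots> \<in> Q" using 1 2 bc Q(1) unfolding isid_def by (metis UNIV_I mult.commute)
  finally show False using Q(2) by blast
qed



theorem proposition3p3:
  fixes f :: "'a::comm_ring_1 \<Rightarrow> 'b::comm_ring_1"
  assumes hom: "f \<in> ring_hom (type_ring :: 'a ring) (type_ring :: 'b ring)"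
    and spe: "stable_prime_ext_prop f"
  shows "(\<forall>(\<mm>::'a set) (\<nn>::'b set).
            quasilocal (type_ring :: 'a ring) \<and> quasilocal (type_ring :: 'b ring) \<and>
            maximalideal \<mm> type_ring \<and> maximalideal \<nn> type_ring \<and> f ` \<mm> \<subseteq> \<nn> \<longrightarrow>
              {a. f a = 0} \<subseteq> nilradical \<and>
              (reduced_ring TYPE('a) \<longrightarrow> inj f))
       \<and> (\<forall>P::'a set. primeideal P type_ring \<longrightarrow>
            genideal (type_ring :: 'b ring) (f ` P) = UNIV \<or>
            {a. f a \<in> genideal (type_ring :: 'b ring) (f ` P)} = P)"
proof -
  have fadd: "f (x + y) = f x + f y" for x y using ring_hom_add[OF hom] by (simp add: type_ring_eq)
  have fmul: "f (x * y) = f x * f y" for x y using ring_hom_mult[OF hom] by (simp add: type_ring_eq)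
  have f1: "f 1 = 1" using ring_hom_one[OF hom] by (simp add: type_ring_eq)
  have f0: "f 0 = 0" using fadd[of 0 0] by simp
  have fneg: "f (- x) = - f x" for x using fadd[of x "-x"] f0 by (simp add: eq_neg_iff_add_eq_0 add.commute)
  have pep: "prime_ext_prop (mpoly_ring 2 :: ((nat \<Rightarrow>\<^sub>0 nat) \<Rightarrow>\<^sub>0 'a) ring)
                         (mpoly_ring 2 :: ((nat \<Rightarrow>\<^sub>0 nat) \<Rightarrow>\<^sub>0 'b) ring) (Poly_Mapping.map f)"
    using spe unfolding stable_prime_ext_prop_def by blast
  have core: "False" if "isid UNIV P" "1 \<notin> P" "\<forall>x y. x * y \<in> P \<longrightarrow> x \<in> P \<or> y \<in> P" "a \<notin> P"
     "f a \<in> genideal (type_ring :: 'b ring) (f ` P)" "1 \<notin> genideal (type_ring :: 'b ring) (f ` P)" for P a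
    using core_b[OF fadd fmul f1 pep that(1-4) refl that(5,6)] .
  have partb: "genideal (type_ring :: 'b ring) (f ` P) = UNIV \<or>
            {a. f a \<in> genideal (type_ring :: 'b ring) (f ` P)} = P" if "primeideal P type_ring" for P
  proof (cases "genideal (type_ring :: 'b ring) (f ` P) = UNIV")
    case True then show ?thesis by simp
  next
    case False note ne = this
    have GIid: "isid UNIV (genideal (type_ring :: 'b ring) (f ` P))"
      unfolding type_ring_eq by (rule isid_genideal[OF closed_UNIV]) simp
    have one: "1 \<notin> genideal (type_ring :: 'b ring) (f ` P)"
      using isid_one[OF GIid closed_UNIV] ne by blast
    have Pp: "isid UNIV P" "1 \<notin> P" "\<forall>x y. x * y \<in> P \<longrightarrow> x \<in> P \<or> y \<in> P"
      using that unfolding type_ring_eq prime_sring_iff[OF closed_UNIV] by auto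
    have "f ` P \<subseteq> genideal (type_ring :: 'b ring) (f ` P)" unfolding type_ring_eq by (rule genideal_super[OF closed_UNIV])
    then have "{a. f a \<in> genideal (type_ring :: 'b ring) (f ` P)} = P"
      using core[OF Pp _ _ one] by blast
    then show ?thesis by simp
  qed
  have parta: "{a. f a = 0} \<subseteq> nilradical \<and> (reduced_ring TYPE('a) \<longrightarrow> inj f)"
    if ql: "quasilocal (type_ring :: 'a ring)" and mm: "maximalideal \<mm> (type_ring :: 'a ring)"
      and nn: "maximalideal \<nn> (type_ring :: 'b ring)" and fmn: "f ` \<mm> \<subseteq> \<nn>" for \<mm> \<nn>
  proof -
    have kern: "{a. f a = 0} \<subseteq> nilradical"
    proof
      fix a assume a: "a \<in> {a. f a = 0}"
      show "a \<in> nilradical"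
      proof (rule ccontr)
        assume nn0: "a \<notin> nilradical"
        then have ak: "\<forall>k. a ^ k \<notin> {0}" by (auto simp: nilradical_def)
        have z: "isid UNIV {0::'a}" by (simp add: isid_def)
        obtain P where P: "isid UNIV P" "\<forall>k. a ^ k \<notin> P"
          and Pmx: "\<forall>Q'. isid UNIV Q' \<and> P \<subseteq> Q' \<and> (\<forall>k. a ^ k \<notin> Q') \<longrightarrow> Q' = P"
          using zorn_ideal[OF z ak] by blast
        have Pprime: "\<forall>b c. b * c \<in> P \<longrightarrow> b \<in> P \<or> c \<in> P" by (rule maximal_is_prime[OF P Pmx])
        have P1: "1 \<notin> P" using P(2) by (metis power_0)
        have aP: "a \<notin> P" using P(2) by (metis power_one_right)
        obtain M where M: "isid UNIV M" "P \<subseteq> M" "\<forall>k. (1::'a) ^ k \<notin> M"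
          and Mmx: "\<forall>Q'. isid UNIV Q' \<and> M \<subseteq> Q' \<and> (\<forall>k. (1::'a) ^ k \<notin> Q') \<longrightarrow> Q' = M"
          using zorn_ideal[OF P(1), of 1] P1 by auto
        have "maximalideal M (type_ring :: 'a ring)"
          unfolding type_ring_eq max_sring_iff[OF closed_UNIV]
        proof (intro conjI allI impI)
          show "isid UNIV M" by (rule M(1))
          show "1 \<notin> M" using M(3) by (metis power_0)
          fix J assume J: "isid UNIV J \<and> M \<subseteq> J"
          show "J = M \<or> J = UNIV"
          proof (cases "1 \<in> J")
            case True then show ?thesis using isid_one[OF _ closed_UNIV] J by blast
          next
            case False then show ?thesis using Mmx J by auto
          qed
        qed
        then have "M = \<mm>" using ql mm unfolding quasilocal_def by blast
        then have "f ` P \<subseteq> \<nn>" using M(2) fmn by blast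
        moreover have nid: "isid UNIV \<nn>" "1 \<notin> \<nn>" using nn unfolding type_ring_eq max_sring_iff[OF closed_UNIV] by auto
        ultimately have "genideal (type_ring :: 'b ring) (f ` P) \<subseteq> \<nn>"
          unfolding type_ring_eq by (intro genideal_sub[OF closed_UNIV nid(1)])
        then have one: "1 \<notin> genideal (type_ring :: 'b ring) (f ` P)" using nid(2) by blast
        have GIid: "isid UNIV (genideal (type_ring :: 'b ring) (f ` P))"
          unfolding type_ring_eq by (rule isid_genideal[OF closed_UNIV]) simp
        have "f a \<in> genideal (type_ring :: 'b ring) (f ` P)" using a GIid by (simp add: isid_def)
        then show False using core[OF P(1) P1 Pprime aP _ one] by blast
      qed
    qed
    moreover have "reduced_ring TYPE('a) \<longrightarrow> inj f"
    proof
      assume "reduced_ring TYPE('a)"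
      then have nil: "(nilradical :: 'a set) = {0}" by (simp add: reduced_ring_def)
      show "inj f"
      proof (rule injI)
        fix x y assume "f x = f y"
        then have "f (x + - y) = 0" using fadd[of x "- y"] fneg[of y] by simp
        then have "x + - y \<in> nilradical" using kern by blast
        then have "x + - y = 0" using nil by blast
        then show "x = y" by simp
      qed
    qed
    ultimately show ?thesis by blast
  qed
  show ?thesis using parta partb by blast
qed


end
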